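(* For $n\ge 4$, the wheel $W_n$ satisfies $\nu^*(W_n)=\frac{13n^2+n}{2}$.
   Context: For a finite simple graph $G=(V,E)$ with $\ell=|V|+|E|$, a construction sequence (c-sequence) is a bijection $x:\{1,\dots,\ell\}\to V\sqcup E$ such that every edge $e=uw$ satisfies $x^{-1}(e)>\max\{x^{-1}(u),x^{-1}(w)\}$. The cost of $x$ is $\nu(x)=\sum_{e=uw\in E}\big(2x^{-1}(e)-x^{-1}(u)-x^{-1}(w)\big)$, and $\nu^*(G)$ is the maximum of $\nu(x)$ over all c-sequences for $G$. The wheel $W_n=C_n*K_1$ is the $(n+1)$-vertex graph obtained from the cycle $C_n$ by adding a hub vertex adjacent to all $n$ cycle vertices. *)

theory Defs
  imports Complex_Main
begin

definition simple_graph :: "'a set \<Rightarrow> 'a set set \<Rightarrow> bool" where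
  "simple_graph V E \<longleftrightarrow> finite V \<and>
     (\<forall>e\<in>E. \<exists>u w. u \<in> V \<and> w \<in> V \<and> u \<noteq> w \<and> e = {u, w})"

definition elems :: "'a set \<Rightarrow> 'a set set \<Rightarrow> ('a + 'a set) set" where
  "elems V E = Inl ` V \<union> Inr ` E"

definition glen :: "'a set \<Rightarrow> 'a set set \<Rightarrow> nat" where
  "glen V E = card V + card E"

definition pos :: "'a set \<Rightarrow> 'a set set \<Rightarrow> (nat \<Rightarrow> 'a + 'a set) \<Rightarrow> ('a + 'a set) \<Rightarrow> nat" where
  "pos V E x a = inv_into {1..glen V E} x a"

definition is_cseq :: "'a set \<Rightarrow> 'a set set \<Rightarrow> (nat \<Rightarrow> 'a + 'a set) \<Rightarrow> bool" where
  "is_cseq V E x \<longleftrightarrow> bij_betw x {1..glen V E} (elems V E) \<and>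
     (\<forall>e\<in>E. \<forall>u\<in>e. pos V E x (Inr e) > pos V E x (Inl u))"

definition cost :: "'a set \<Rightarrow> 'a set set \<Rightarrow> (nat \<Rightarrow> 'a + 'a set) \<Rightarrow> int" where
  "cost V E x = (\<Sum>e\<in>E. 2 * int (pos V E x (Inr e)) - (\<Sum>u\<in>e. int (pos V E x (Inl u))))"

definition nu_star :: "'a set \<Rightarrow> 'a set set \<Rightarrow> int" where
  "nu_star V E = Max {cost V E x | x. is_cseq V E x}"

text \<open>Wheel W_n: cycle vertices 0..n-1, hub n.\<close>
definition wheel_V :: "nat \<Rightarrow> nat set" where
  "wheel_V n = {0..n}"

definition wheel_E :: "nat \<Rightarrow> nat set set" where
  "wheel_E n = {{i, (i + 1) mod n} | i. i < n} \<union> {{i, n} | i. i < n}"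

end

theory Submission imports Defs begin

lemma suc_mod: "(i::nat) < n \<Longrightarrow> Suc i mod n = (if Suc i < n then Suc i else 0)"
proof (cases "Suc i < n")
  case False
  assume "i < n" then have "Suc i = n" using False by simp
  then show ?thesis by simp
qed simp

lemma wheel_E_alt: "wheel_E n = (\<lambda>i. {i,(i+1) mod n}) ` {..<n} \<union> (\<lambda>i. {i,n}) ` {..<n}"
  unfolding wheel_E_def by auto

lemma inj_cyc: fixes n :: nat assumes "n \<ge> 3" shows "inj_on (\<lambda>i. {i,(i+1) mod n}) {..<n}"
proof (rule inj_onI)
  fix i j assume i: "i \<in> {..<n}" and j: "j \<in> {..<n}" and eq: "{i,(i+1) mod n} = {j,(j+1) mod n}"
  show "i = j" using eq i j assms unfolding doubleton_eq_iff
    by (auto simp: suc_mod split: if_splits)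
qed

lemma inj_spk: "inj_on (\<lambda>i. {i,n}) {..<n}"
  by (rule inj_onI) (auto simp: doubleton_eq_iff)

lemma disj_cs: "(n::nat) \<ge> 1 \<Longrightarrow> (\<lambda>i. {i,(i+1) mod n}) ` {..<n} \<inter> (\<lambda>i. {i,n}) ` {..<n} = {}"
  by (auto simp: doubleton_eq_iff suc_mod split: if_splits)

lemma card_E: assumes "n \<ge> 3" shows "card (wheel_E n) = 2*n"
proof -
  have "card (wheel_E n) = card ((\<lambda>i. {i,(i+1) mod n}) ` {..<n}) + card ((\<lambda>i. {i,n}) ` {..<n})"
    unfolding wheel_E_alt by (rule card_Un_disjoint) (use disj_cs assms in auto)
  also have "\<dots> = 2*n" using card_image[OF inj_cyc[OF assms]] card_image[OF inj_spk[of n]] by simp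
  finally show ?thesis .
qed

lemma card_V: "card (wheel_V n) = n + 1" unfolding wheel_V_def by simp

lemma glen_w: "n \<ge> 3 \<Longrightarrow> glen (wheel_V n) (wheel_E n) = 3*n+1"
  unfolding glen_def by (simp add: card_E card_V)

lemma E_sub: "e \<in> wheel_E n \<Longrightarrow> u \<in> e \<Longrightarrow> n \<ge> 1 \<Longrightarrow> u \<le> n"
  unfolding wheel_E_def by auto

lemma finite_E: "finite (wheel_E n)"
  unfolding wheel_E_alt by simp

lemma shift_sum: fixes n :: nat assumes "n \<ge> 1" shows "(\<Sum>i<n. f ((i+1) mod n)) = (\<Sum>i<n. (f i :: int))"
proof -
  obtain m where m: "n = Suc m" using assms by (cases n) auto
  have "(\<Sum>i<Suc m. f ((i+1) mod Suc m)) = (\<Sum>i<m. f ((i+1) mod Suc m)) + f 0" by simp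
  also have "(\<Sum>i<m. f ((i+1) mod Suc m)) = (\<Sum>i<m. f (Suc i))" by (rule sum.cong) auto
  also have "\<dots> + f 0 = (\<Sum>i<Suc m. f i)" using sum.lessThan_Suc_shift[of f m] by simp
  finally show ?thesis using m by simp
qed

lemma double_count: fixes n :: nat assumes "n \<ge> 3"
  shows "(\<Sum>e\<in>wheel_E n. \<Sum>u\<in>e. (f u :: int)) = 3*(\<Sum>i<n. f i) + int n * f n"
proof -
  let ?C = "(\<lambda>i. {i,(i+1) mod n}) ` {..<n}" and ?S = "(\<lambda>i. {i,n}) ` {..<n}"
  have "(\<Sum>e\<in>wheel_E n. \<Sum>u\<in>e. f u) = (\<Sum>e\<in>?C. \<Sum>u\<in>e. f u) + (\<Sum>e\<in>?S. \<Sum>u\<in>e. f u)"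
    unfolding wheel_E_alt by (rule sum.union_disjoint) (use disj_cs assms in auto)
  also have "(\<Sum>e\<in>?C. \<Sum>u\<in>e. f u) = (\<Sum>i<n. f i + f ((i+1) mod n))"
  proof -
    have "(\<Sum>e\<in>?C. \<Sum>u\<in>e. f u) = (\<Sum>i<n. \<Sum>u\<in>{i,(i+1) mod n}. f u)"
      by (rule sum.reindex[OF inj_cyc[OF assms], unfolded comp_def])
    also have "\<dots> = (\<Sum>i<n. f i + f ((i+1) mod n))"
      by (rule sum.cong) (use assms in \<open>auto simp: suc_mod\<close>)
    finally show ?thesis .
  qed
  also have "(\<Sum>e\<in>?S. \<Sum>u\<in>e. f u) = (\<Sum>i<n. f i + f n)"
  proof -
    have "(\<Sum>e\<in>?S. \<Sum>u\<in>e. f u) = (\<Sum>i<n. \<Sum>u\<in>{i,n}. f u)"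
      by (rule sum.reindex[OF inj_spk, unfolded comp_def])
    also have "\<dots> = (\<Sum>i<n. f i + f n)"
      by (rule sum.cong) auto
    finally show ?thesis .
  qed
  finally show ?thesis using shift_sum[of n f] assms by (simp add: sum.distrib)
qed

lemma sum_distinct_pos: "finite S \<Longrightarrow> 0 \<notin> S \<Longrightarrow> card S * (card S + 1) \<le> 2 * (\<Sum>s\<in>S. (s::nat))"
proof (induction "card S" arbitrary: S)
  case 0 then show ?case by simp
next
  case (Suc k)
  then have ne: "S \<noteq> {}" by auto
  define m where "m = Max S"
  have mS: "m \<in> S" using Suc ne m_def by simp
  have sub: "S \<subseteq> {1..m}"
  proof
    fix x assume "x \<in> S"
    have "x \<noteq> 0" using Suc.prems \<open>x \<in> S\<close> by (metis)
    have "x \<le> m" using Suc.prems \<open>x \<in> S\<close> m_def by simp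
    then show "x \<in> {1..m}" using \<open>x \<noteq> 0\<close> by simp
  qed
  have "card S \<le> m" using card_mono[OF _ sub] by simp
  have "card (S - {m}) = k" using Suc mS by simp
  then have IH: "k * (k+1) \<le> 2 * (\<Sum>s\<in>S - {m}. s)" using Suc.hyps(1)[of "S - {m}"] Suc.prems by auto
  have "(\<Sum>s\<in>S. s) = m + (\<Sum>s\<in>S - {m}. s)" using Suc mS by (simp add: sum.remove)
  then show ?case using IH \<open>card S \<le> m\<close> \<open>Suc k = card S\<close>[symmetric] by simp
qed

lemma sum_V: "(\<Sum>v\<in>wheel_V n. (f v :: int)) = (\<Sum>i<n. f i) + f n"
proof -
  have "wheel_V n = insert n {..<n}" unfolding wheel_V_def by auto
  then show ?thesis by simp
qed

lemma finite_V: "finite (wheel_V n)" unfolding wheel_V_def by simp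

lemma cost_formula:
  fixes n :: nat
  assumes n: "n \<ge> 4"
    and bij: "bij_betw x {1..glen (wheel_V n) (wheel_E n)} (elems (wheel_V n) (wheel_E n))"
  shows "cost (wheel_V n) (wheel_E n) x =
     2 * (\<Sum>k\<in>{1..3*n+1}. int k)
     - 5 * (\<Sum>v\<in>wheel_V n. int (pos (wheel_V n) (wheel_E n) x (Inl v)))
     - (int n - 3) * int (pos (wheel_V n) (wheel_E n) x (Inl n))"
proof -
  let ?V = "wheel_V n" and ?E = "wheel_E n"
  let ?p = "pos ?V ?E x"
  have L: "glen ?V ?E = 3*n+1" using n by (simp add: glen_w)
  have bijp: "bij_betw ?p (elems ?V ?E) {1..3*n+1}"
    unfolding pos_def using bij_betw_inv_into[OF bij] L by simp
  have tot: "(\<Sum>a\<in>elems ?V ?E. int (?p a)) = (\<Sum>k\<in>{1..3*n+1}. int k)"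
    using sum.reindex_bij_betw[OF bijp, of int] .
  have split: "(\<Sum>a\<in>elems ?V ?E. int (?p a)) =
      (\<Sum>v\<in>?V. int (?p (Inl v))) + (\<Sum>e\<in>?E. int (?p (Inr e)))"
  proof -
    have "(\<Sum>a\<in>elems ?V ?E. int (?p a)) = (\<Sum>a\<in>Inl ` ?V. int (?p a)) + (\<Sum>a\<in>Inr ` ?E. int (?p a))"
      unfolding elems_def by (rule sum.union_disjoint) (auto simp: finite_V finite_E)
    also have "\<dots> = (\<Sum>v\<in>?V. int (?p (Inl v))) + (\<Sum>e\<in>?E. int (?p (Inr e)))"
      by (simp add: sum.reindex)
    finally show ?thesis .
  qed
  have c: "cost ?V ?E x = 2 * (\<Sum>e\<in>?E. int (?p (Inr e))) - (3 * (\<Sum>i<n. int (?p (Inl i))) + int n * int (?p (Inl n)))"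
    unfolding cost_def
    using double_count[of n "\<lambda>u. int (?p (Inl u))"] n
    by (simp add: sum_subtractf sum_distrib_left)
  have sv: "(\<Sum>v\<in>?V. int (?p (Inl v))) = (\<Sum>i<n. int (?p (Inl i))) + int (?p (Inl n))"
    by (rule sum_V)
  show ?thesis using c sv split tot by (simp add: algebra_simps)
qed

lemma T_val: "2 * (\<Sum>k\<in>{1..m}. int k) = int m * (int m + 1)"
  using double_gauss_sum_from_Suc_0[of m, where 'a=int] by simp

lemma bounds:
  fixes n :: nat
  assumes n: "n \<ge> 4"
    and bij: "bij_betw x {1..glen (wheel_V n) (wheel_E n)} (elems (wheel_V n) (wheel_E n))"
  shows "2 * cost (wheel_V n) (wheel_E n) x \<le> 13 * int n ^ 2 + int n"
    and "cost (wheel_V n) (wheel_E n) x \<ge> - 3 * (\<Sum>k\<in>{1..3*n+1}. int k) - (int n - 3) * (3 * int n + 1)"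
proof -
  let ?V = "wheel_V n" and ?E = "wheel_E n"
  let ?p = "pos ?V ?E x"
  let ?T = "\<Sum>k\<in>{1..3*n+1}. int k"
  let ?SV = "\<Sum>v\<in>?V. int (?p (Inl v))"
  have L: "glen ?V ?E = 3*n+1" using n by (simp add: glen_w)
  have bijp: "bij_betw ?p (elems ?V ?E) {1..3*n+1}"
    unfolding pos_def using bij_betw_inv_into[OF bij] L by simp
  have prange: "a \<in> elems ?V ?E \<Longrightarrow> ?p a \<in> {1..3*n+1}" for a
    using bijp by (auto simp: bij_betw_def)
  have hV: "n \<in> ?V" unfolding wheel_V_def by simp
  have ph: "?p (Inl n) \<in> {1..3*n+1}" using prange[of "Inl n"] hV by (simp add: elems_def)
  have cf: "cost ?V ?E x = 2 * ?T - 5 * ?SV - (int n - 3) * int (?p (Inl n))"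
    by (rule cost_formula[OF n bij])
  have T2: "2 * ?T = (3 * int n + 1) * (3 * int n + 2)"
  proof -
    have "2 * ?T = int (3*n+1) * (int (3*n+1) + 1)" by (rule T_val)
    also have "\<dots> = (3 * int n + 1) * (3 * int n + 2)" by (simp add: algebra_simps)
    finally show ?thesis .
  qed
  have injV: "inj_on (\<lambda>v. ?p (Inl v)) ?V"
  proof (rule inj_onI)
    fix u v assume "u \<in> ?V" "v \<in> ?V" "?p (Inl u) = ?p (Inl v)"
    then have "Inl u = (Inl v :: nat + nat set)"
      using bijp unfolding bij_betw_def inj_on_def by (auto simp: elems_def)
    then show "u = v" by simp
  qed
  let ?S = "(\<lambda>v. ?p (Inl v)) ` ?V"
  have cardS: "card ?S = n + 1" using card_image[OF injV] card_V by simp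
  have S0: "0 \<notin> ?S" using prange by (force simp: elems_def)
  have "card ?S * (card ?S + 1) \<le> 2 * (\<Sum>s\<in>?S. s)"
    by (rule sum_distinct_pos) (use S0 finite_V in auto)
  moreover have "(\<Sum>s\<in>?S. s) = (\<Sum>v\<in>?V. ?p (Inl v))"
    using sum.reindex[OF injV, of "\<lambda>s. s"] by simp
  ultimately have "(n+1)*(n+2) \<le> 2 * (\<Sum>v\<in>?V. ?p (Inl v))" using cardS by simp
  then have "int ((n+1)*(n+2)) \<le> int (2 * (\<Sum>v\<in>?V. ?p (Inl v)))" by linarith
  then have SVlow: "(int n + 1) * (int n + 2) \<le> 2 * ?SV" by (simp add: of_nat_sum algebra_simps)
  have phlow: "(int n - 3) * 1 \<le> (int n - 3) * int (?p (Inl n))"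
    by (rule mult_left_mono) (use ph n in auto)
  show "2 * cost ?V ?E x \<le> 13 * int n ^ 2 + int n"
    using cf T2 SVlow phlow by (simp add: algebra_simps power2_eq_square)
  have split: "?T = ?SV + (\<Sum>e\<in>?E. int (?p (Inr e)))"
  proof -
    have "(\<Sum>a\<in>elems ?V ?E. int (?p a)) = ?T"
      using sum.reindex_bij_betw[OF bijp, of int] .
    moreover have "(\<Sum>a\<in>elems ?V ?E. int (?p a)) = (\<Sum>a\<in>Inl ` ?V. int (?p a)) + (\<Sum>a\<in>Inr ` ?E. int (?p a))"
      unfolding elems_def by (rule sum.union_disjoint) (auto simp: finite_V finite_E)
    ultimately show ?thesis by (simp add: sum.reindex)
  qed
  have "(\<Sum>e\<in>?E. int (?p (Inr e))) \<ge> 0" by (rule sum_nonneg) simp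
  then have SVup: "?SV \<le> ?T" using split by linarith
  have phup: "(int n - 3) * int (?p (Inl n)) \<le> (int n - 3) * (3 * int n + 1)"
    by (rule mult_left_mono) (use ph n in auto)
  show "cost ?V ?E x \<ge> - 3 * ?T - (int n - 3) * (3 * int n + 1)"
    using cf SVup phup by linarith
qed

lemma sum_shift2: "2 * (\<Sum>i<n. int (i+2)) = int n * int n + 3 * int n"
  by (induction n) (auto simp: algebra_simps)

lemma construction:
  fixes n :: nat
  assumes n: "n \<ge> 4"
  shows "\<exists>x. is_cseq (wheel_V n) (wheel_E n) x \<and> 2 * cost (wheel_V n) (wheel_E n) x = 13 * int n ^ 2 + int n"
proof -
  let ?V = "wheel_V n" and ?E = "wheel_E n"
  have cE: "card ?E = 2*n" using n by (simp add: card_E)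
  obtain g where g: "bij_betw g {0..<2*n} ?E"
    using ex_bij_betw_nat_finite[OF finite_E[of n]] cE by auto
  define x where "x k = (if k = 1 then Inl n else if k \<le> n+1 then Inl (k-2) else Inr (g (k - (n+2))))"
    for k :: nat
  have L: "glen ?V ?E = 3*n+1" using n by (simp add: glen_w)
  have b1: "bij_betw x {1} {Inl n}" by (simp add: x_def bij_betw_def)
  have b2: "bij_betw x {2..n+1} (Inl ` {..<n} :: (nat + nat set) set)"
  proof (rule bij_betw_imageI)
    show "inj_on x {2..n+1}" by (rule inj_onI) (auto simp: x_def)
    show "x ` {2..n+1} = Inl ` {..<n}"
    proof
      show "x ` {2..n+1} \<subseteq> Inl ` {..<n}" by (auto simp: x_def)
      show "Inl ` {..<n} \<subseteq> x ` {2..n+1}"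
      proof
        fix a :: "nat + nat set" assume "a \<in> Inl ` {..<n}"
        then obtain i where i: "i < n" "a = Inl i" by auto
        then have "x (i+2) = a" by (simp add: x_def)
        moreover have "i + 2 \<in> {2..n+1}" using i by simp
        ultimately show "a \<in> x ` {2..n+1}" by blast
      qed
    qed
  qed
  have b3: "bij_betw x {n+2..3*n+1} (Inr ` ?E)"
  proof (rule bij_betw_imageI)
    show "inj_on x {n+2..3*n+1}"
    proof (rule inj_onI)
      fix k k' assume k: "k \<in> {n+2..3*n+1}" and k': "k' \<in> {n+2..3*n+1}" and eq: "x k = x k'"
      then have "g (k - (n+2)) = g (k' - (n+2))" by (simp add: x_def)
      moreover have "k - (n+2) \<in> {0..<2*n}" "k' - (n+2) \<in> {0..<2*n}" using k k' by auto
      ultimately have "k - (n+2) = k' - (n+2)" using g unfolding bij_betw_def inj_on_def by blast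
      then have "(k - (n+2)) + (n+2) = (k' - (n+2)) + (n+2)" by (simp only:)
      moreover have "(k - (n+2)) + (n+2) = k" by (rule le_add_diff_inverse2) (use k in simp)
      moreover have "(k' - (n+2)) + (n+2) = k'" by (rule le_add_diff_inverse2) (use k' in simp)
      ultimately show "k = k'" by (simp only:)
    qed
    show "x ` {n+2..3*n+1} = Inr ` ?E"
    proof
      show "x ` {n+2..3*n+1} \<subseteq> Inr ` ?E"
      proof
        fix a assume "a \<in> x ` {n+2..3*n+1}"
        then obtain k where k: "k \<in> {n+2..3*n+1}" "a = x k" by auto
        then have a1: "a = Inr (g (k - (n+2)))" by (simp add: x_def)
        have lt: "k - (n+2) < 2*n" using k(1) by auto
        have "g (k - (n+2)) \<in> ?E" using bij_betw_apply[OF g, of "k - (n+2)"] lt by simp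
        then show "a \<in> Inr ` ?E" using a1 by blast
      qed
      show "Inr ` ?E \<subseteq> x ` {n+2..3*n+1}"
      proof
        fix a :: "nat + nat set" assume "a \<in> Inr ` ?E"
        then obtain e where e: "e \<in> ?E" "a = Inr e" by auto
        have "e \<in> g ` {0..<2*n}" using bij_betw_imp_surj_on[OF g] e by simp
        then obtain j where j: "j < 2*n" "e = g j" by auto
        then have "x (j + (n+2)) = a" using e by (simp add: x_def)
        moreover have "j + (n+2) \<in> {n+2..3*n+1}" using j by simp
        ultimately show "a \<in> x ` {n+2..3*n+1}" by blast
      qed
    qed
  qed
  have U1: "{1..3*n+1} = ({1} \<union> {2..n+1}) \<union> {n+2..3*n+1}" by auto
  have U2: "elems ?V ?E = ({Inl n} \<union> Inl ` {..<n}) \<union> Inr ` ?E"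
    unfolding elems_def wheel_V_def by auto
  have bij: "bij_betw x {1..glen ?V ?E} (elems ?V ?E)"
    unfolding L U1 U2
    by (intro bij_betw_combine b1 b2 b3) auto
  have inj: "inj_on x {1..3*n+1}" using bij L by (simp add: bij_betw_def)
  have posx: "pos ?V ?E x (x k) = k" if "k \<in> {1..3*n+1}" for k
    unfolding pos_def L using inv_into_f_f[OF inj that] .
  have ph: "pos ?V ?E x (Inl n) = 1" using posx[of 1] by (simp add: x_def)
  have pi: "pos ?V ?E x (Inl i) = i + 2" if "i < n" for i
    using posx[of "i+2"] that by (simp add: x_def)
  have pv: "pos ?V ?E x (Inl u) \<le> n + 1" if "u \<le> n" for u
    using ph pi[of u] that by (cases "u = n") auto
  have pe: "pos ?V ?E x (Inr e) \<ge> n + 2" if "e \<in> ?E" for e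
  proof -
    have "e \<in> g ` {0..<2*n}" using bij_betw_imp_surj_on[OF g] that by simp
    then obtain j where j: "j < 2*n" "e = g j" by auto
    then have "x (j + (n+2)) = Inr e" by (simp add: x_def)
    then show ?thesis using posx[of "j + (n+2)"] j by simp
  qed
  have cs: "is_cseq ?V ?E x"
    unfolding is_cseq_def
  proof (intro conjI ballI)
    show "bij_betw x {1..glen ?V ?E} (elems ?V ?E)" by (rule bij)
    fix e u assume e: "e \<in> ?E" and u: "u \<in> e"
    have "u \<le> n" using E_sub[OF e u] n by simp
    then show "pos ?V ?E x (Inl u) < pos ?V ?E x (Inr e)" using pv pe[OF e] by fastforce
  qed
  have SV: "2 * (\<Sum>v\<in>?V. int (pos ?V ?E x (Inl v))) = (int n + 1) * (int n + 2)"
  proof -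
    have "(\<Sum>v\<in>?V. int (pos ?V ?E x (Inl v))) = (\<Sum>i<n. int (pos ?V ?E x (Inl i))) + int (pos ?V ?E x (Inl n))"
      by (rule sum_V)
    also have "(\<Sum>i<n. int (pos ?V ?E x (Inl i))) = (\<Sum>i<n. int (i+2))"
      by (rule sum.cong) (auto simp: pi)
    finally show ?thesis using sum_shift2[of n] ph by (simp add: algebra_simps)
  qed
  have T2: "2 * (\<Sum>k\<in>{1..3*n+1}. int k) = (3 * int n + 1) * (3 * int n + 2)"
  proof -
    have "2 * (\<Sum>k\<in>{1..3*n+1}. int k) = int (3*n+1) * (int (3*n+1) + 1)" by (rule T_val)
    also have "\<dots> = (3 * int n + 1) * (3 * int n + 2)" by (simp add: algebra_simps)
    finally show ?thesis .
  qed
  have cf: "cost ?V ?E x = 2 * (\<Sum>k\<in>{1..3*n+1}. int k) - 5 * (\<Sum>v\<in>?V. int (pos ?V ?E x (Inl v)))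
     - (int n - 3) * int (pos ?V ?E x (Inl n))"
    by (rule cost_formula[OF n bij])
  have "2 * cost ?V ?E x = 13 * int n ^ 2 + int n"
    using cf SV T2 ph by (simp add: algebra_simps power2_eq_square)
  then show ?thesis using cs by blast
qed

theorem theorem7:
  fixes n :: nat
  assumes "n \<ge> 4"
  shows "real_of_int (nu_star (wheel_V n) (wheel_E n)) = (13 * real n ^ 2 + real n) / 2"
proof -
  let ?V = "wheel_V n" and ?E = "wheel_E n"
  let ?S = "{cost ?V ?E x | x. is_cseq ?V ?E x}"
  let ?B = "- 3 * (\<Sum>k\<in>{1..3*n+1}. int k) - (int n - 3) * (3 * int n + 1)"
  obtain x0 where x0: "is_cseq ?V ?E x0" "2 * cost ?V ?E x0 = 13 * int n ^ 2 + int n"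
    using construction[OF assms] by blast
  let ?c = "cost ?V ?E x0"
  have up: "c \<le> ?c" if cS: "c \<in> ?S" for c
  proof -
    obtain x where "is_cseq ?V ?E x" "c = cost ?V ?E x" using cS by blast
    then show ?thesis using bounds(1)[OF assms, of x] x0(2) by (auto simp: is_cseq_def)
  qed
  have low: "c \<ge> ?B" if cS: "c \<in> ?S" for c
  proof -
    obtain x where "is_cseq ?V ?E x" "c = cost ?V ?E x" using cS by blast
    then show ?thesis using bounds(2)[OF assms, of x] by (auto simp: is_cseq_def)
  qed
  have fin: "finite ?S"
  proof (rule finite_subset[of _ "{?B..?c}"])
    show "?S \<subseteq> {?B..?c}"
    proof
      fix c assume c: "c \<in> ?S"
      show "c \<in> {?B..?c}" using up[OF c] low[OF c] by (simp only: atLeastAtMost_iff)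
    qed
  qed (rule finite_atLeastAtMost_int)
  have "nu_star ?V ?E = ?c"
    unfolding nu_star_def by (rule Max_eqI[OF fin]) (use up x0 in auto)
  then have "2 * real_of_int (nu_star ?V ?E) = real_of_int (13 * int n ^ 2 + int n)"
    using x0(2) by (metis of_int_mult of_int_numeral)
  then show ?thesis by simp
qed

end
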